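(* There exist an environment $E$ and a total preorder $\succeq$ on $\Pi^E$ such that $\succeq\in\mathrm{Ord}_{\mathrm{MR}}(E)\cap\mathrm{Ord}_{\mathrm{LAR}}(E)$ but $\succeq\notin\mathrm{Ord}_{\mathrm{LTL}}(E)$.
   Context: An environment is a tuple $E=(\mathcal S,\mathcal A,\mathcal T,\mathcal I)$ where $\mathcal S,\mathcal A$ are finite nonempty sets, $\mathcal T:\mathcal S\times\mathcal A\to\Delta(\mathcal S)$ and $\mathcal I\in\Delta(\mathcal S)$. A policy is a map $\pi:\mathcal S\to\Delta(\mathcal A)$ (stationary, possibly stochastic); $\Pi^E$ denotes the set of all policies. A trajectory $\xi=(s_0,a_0,s_1,a_1,\dots)\in\Xi:=\mathcal S\times(\mathcal A\times\mathcal S)^\omega$ is generated under $\pi$ by $s_0\sim\mathcal I$, $a_t\sim\pi(s_t)$, $s_{t+1}\sim\mathcal T(s_t,a_t)$; $\mathbb E^\pi_\xi$ denotes expectation under this distribution. An objective-specification formalism $X$ assigns to each environment $E$ a set of objective specifications, each inducing a total preorder $\succeq$ on $\Pi^E$; $\mathrm{Ord}_X(E)$ is the set of total preorders so induced. A specification defining a scalar $J:\Pi^E\to\mathbb R$ induces $\pi_1\succeq\pi_2\iff J(\pi_1)\ge J(\pi_2)$. MR: specification $(\mathcal R,\gamma)$, $\mathcal R:\mathcal S\times\mathcal A\times\mathcal S\to\mathbb R$, $\gamma\in[0,1)$, $J(\pi)=\mathbb E^\pi_\xi[\sum_{t=0}^\infty\gamma^t\mathcal R(s_t,a_t,s_{t+1})]$.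 LAR: specification $(\mathcal R)$, $\mathcal R:\mathcal S\times\mathcal A\times\mathcal S\to\mathbb R$, $J(\pi)=\lim_{N\to\infty}\frac1N\mathbb E^\pi_\xi[\sum_{t=0}^{N-1}\mathcal R(s_t,a_t,s_{t+1})]$. LTL: specification $(\varphi)$ with $\varphi$ a linear temporal logic formula whose atomic propositions are the transitions $(s,a,s')\in\mathcal S\times\mathcal A\times\mathcal S$, built with $\neg,\lor,\land,\to$ and the temporal operators $\bigcirc$ (next), $\square$ (always), $\lozenge$ (eventually), $\mathcal U$ (until). Semantics on a trajectory $\xi$ at time $t$: an atomic proposition $(s,a,s')$ holds iff $(s_t,a_t,s_{t+1})=(s,a,s')$; $\bigcirc\psi$ holds iff $\psi$ holds at $t+1$; $\square\psi$ iff $\psi$ holds at every $t'\ge t$; $\lozenge\psi$ iff $\psi$ holds at some $t'\ge t$; $\psi\,\mathcal U\,\chi$ iff there is $t'\ge t$ with $\chi$ holding at $t'$ and $\psi$ holding at every $t''$ with $t\le t''<t'$; Boolean connectives as usual. $\varphi(\xi)=1$ if $\varphi$ holds at time $0$ and $0$ otherwise; $J(\pi)=\mathbb E^\pi_\xi[\varphi(\xi)]$. *)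

theory Defs
  imports "HOL-Probability.Probability"
begin

(* States and actions are encoded as natural numbers; an environment carries
   explicit finite nonempty carrier sets S and A. *)
record env =
  St :: "nat set"
  Ac :: "nat set"
  Tr :: "nat \<Rightarrow> nat \<Rightarrow> nat pmf"
  In :: "nat pmf"

definition wf_env :: "env \<Rightarrow> bool" where
  "wf_env E \<longleftrightarrow> finite (St E) \<and> St E \<noteq> {} \<and> finite (Ac E) \<and> Ac E \<noteq> {} \<and>
     (\<forall>s\<in>St E. \<forall>a\<in>Ac E. set_pmf (Tr E s a) \<subseteq> St E) \<and> set_pmf (In E) \<subseteq> St E"

(* Stationary stochastic policies S -> Delta(A), extensional outside S *)
definition policies :: "env \<Rightarrow> (nat \<Rightarrow> nat pmf) set" where
  "policies E = {\<pi>. (\<forall>s\<in>St E. set_pmf (\<pi> s) \<subseteq> Ac E) \<and>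
                     (\<forall>s. s \<notin> St E \<longrightarrow> \<pi> s = return_pmf undefined)}"

(* A trajectory (s0,a0,s1,a1,...) is represented as the stream of pairs (s_t,a_t). *)
fun cont_prob :: "env \<Rightarrow> (nat \<Rightarrow> nat pmf) \<Rightarrow> nat \<Rightarrow> nat \<Rightarrow> (nat \<times> nat) list \<Rightarrow> real" where
  "cont_prob E \<pi> s a [] = 1"
| "cont_prob E \<pi> s a ((s', a') # xs) =
     pmf (Tr E s a) s' * pmf (\<pi> s') a' * cont_prob E \<pi> s' a' xs"

fun prefix_prob :: "env \<Rightarrow> (nat \<Rightarrow> nat pmf) \<Rightarrow> (nat \<times> nat) list \<Rightarrow> real" where
  "prefix_prob E \<pi> [] = 1"
| "prefix_prob E \<pi> ((s, a) # xs) = pmf (In E) s * pmf (\<pi> s) a * cont_prob E \<pi> s a xs"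

(* The trajectory distribution under \<pi>: the (unique) probability measure on
   trajectories whose finite-dimensional distributions are those of the process
   s0 ~ I, a_t ~ \<pi>(s_t), s_{t+1} ~ T(s_t,a_t). *)
definition traj :: "env \<Rightarrow> (nat \<Rightarrow> nat pmf) \<Rightarrow> (nat \<times> nat) stream measure" where
  "traj E \<pi> = (THE M. prob_space M \<and> sets M = sets (stream_space (count_space UNIV)) \<and>
      (\<forall>xs. emeasure M (sstart UNIV xs) = ennreal (prefix_prob E \<pi> xs)))"

definition trans_at :: "(nat \<times> nat) stream \<Rightarrow> nat \<Rightarrow> nat \<times> nat \<times> nat" where
  "trans_at \<omega> t = (fst (\<omega> !! t), snd (\<omega> !! t), fst (\<omega> !! Suc t))"

definition J_MR :: "env \<Rightarrow> (nat \<times> nat \<times> nat \<Rightarrow> real) \<Rightarrow> real \<Rightarrow> (nat \<Rightarrow> nat pmf) \<Rightarrow> real" where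
  "J_MR E R \<gamma> \<pi> = (\<integral>\<omega>. (\<Sum>t. \<gamma> ^ t * R (trans_at \<omega> t)) \<partial>traj E \<pi>)"

definition J_LAR :: "env \<Rightarrow> (nat \<times> nat \<times> nat \<Rightarrow> real) \<Rightarrow> (nat \<Rightarrow> nat pmf) \<Rightarrow> real" where
  "J_LAR E R \<pi> = lim (\<lambda>N. (1 / real N) * (\<integral>\<omega>. (\<Sum>t<N. R (trans_at \<omega> t)) \<partial>traj E \<pi>))"

datatype ltl =
    LAtom "nat \<times> nat \<times> nat"
  | LNot ltl
  | LOr ltl ltl
  | LAnd ltl ltl
  | LImp ltl ltl
  | LNext ltl
  | LAlways ltl
  | LEventually ltl
  | LUntil ltl ltl

primrec ltl_atoms :: "ltl \<Rightarrow> (nat \<times> nat \<times> nat) set" where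
  "ltl_atoms (LAtom p) = {p}"
| "ltl_atoms (LNot f) = ltl_atoms f"
| "ltl_atoms (LOr f g) = ltl_atoms f \<union> ltl_atoms g"
| "ltl_atoms (LAnd f g) = ltl_atoms f \<union> ltl_atoms g"
| "ltl_atoms (LImp f g) = ltl_atoms f \<union> ltl_atoms g"
| "ltl_atoms (LNext f) = ltl_atoms f"
| "ltl_atoms (LAlways f) = ltl_atoms f"
| "ltl_atoms (LEventually f) = ltl_atoms f"
| "ltl_atoms (LUntil f g) = ltl_atoms f \<union> ltl_atoms g"

primrec ltl_holds :: "ltl \<Rightarrow> (nat \<times> nat) stream \<Rightarrow> nat \<Rightarrow> bool" where
  "ltl_holds (LAtom p) \<omega> t = (trans_at \<omega> t = p)"
| "ltl_holds (LNot f) \<omega> t = (\<not> ltl_holds f \<omega> t)"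
| "ltl_holds (LOr f g) \<omega> t = (ltl_holds f \<omega> t \<or> ltl_holds g \<omega> t)"
| "ltl_holds (LAnd f g) \<omega> t = (ltl_holds f \<omega> t \<and> ltl_holds g \<omega> t)"
| "ltl_holds (LImp f g) \<omega> t = (ltl_holds f \<omega> t \<longrightarrow> ltl_holds g \<omega> t)"
| "ltl_holds (LNext f) \<omega> t = ltl_holds f \<omega> (Suc t)"
| "ltl_holds (LAlways f) \<omega> t = (\<forall>t'\<ge>t. ltl_holds f \<omega> t')"
| "ltl_holds (LEventually f) \<omega> t = (\<exists>t'\<ge>t. ltl_holds f \<omega> t')"
| "ltl_holds (LUntil f g) \<omega> t =
     (\<exists>t'\<ge>t. ltl_holds g \<omega> t' \<and> (\<forall>t''. t \<le> t'' \<and> t'' < t' \<longrightarrow> ltl_holds f \<omega> t''))"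

definition J_LTL :: "env \<Rightarrow> ltl \<Rightarrow> (nat \<Rightarrow> nat pmf) \<Rightarrow> real" where
  "J_LTL E \<phi> \<pi> = (\<integral>\<omega>. (if ltl_holds \<phi> \<omega> 0 then 1 else 0) \<partial>traj E \<pi>)"

(* preorder on policies induced by a scalar objective: (\<pi>1,\<pi>2) means \<pi>1 \<succeq> \<pi>2 *)
definition induced_ord :: "env \<Rightarrow> ((nat \<Rightarrow> nat pmf) \<Rightarrow> real) \<Rightarrow> ((nat \<Rightarrow> nat pmf) \<times> (nat \<Rightarrow> nat pmf)) set" where
  "induced_ord E J = {(\<pi>1, \<pi>2). \<pi>1 \<in> policies E \<and> \<pi>2 \<in> policies E \<and> J \<pi>1 \<ge> J \<pi>2}"

definition Ord_MR :: "env \<Rightarrow> ((nat \<Rightarrow> nat pmf) \<times> (nat \<Rightarrow> nat pmf)) set set" where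
  "Ord_MR E = {induced_ord E (J_MR E R \<gamma>) | R \<gamma>. 0 \<le> \<gamma> \<and> \<gamma> < 1}"

definition Ord_LAR :: "env \<Rightarrow> ((nat \<Rightarrow> nat pmf) \<times> (nat \<Rightarrow> nat pmf)) set set" where
  "Ord_LAR E = {induced_ord E (J_LAR E R) | R. True}"

definition Ord_LTL :: "env \<Rightarrow> ((nat \<Rightarrow> nat pmf) \<times> (nat \<Rightarrow> nat pmf)) set set" where
  "Ord_LTL E = {induced_ord E (J_LTL E \<phi>) | \<phi>. ltl_atoms \<phi> \<subseteq> St E \<times> Ac E \<times> St E}"

end

theory Submission
  imports Defs
begin

definition E0 :: env where
  "E0 = \<lparr>St = {0}, Ac = {0,1,2}, Tr = (\<lambda>_ _. return_pmf 0), In = return_pmf 0\<rparr>"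

definition val :: "nat \<Rightarrow> real" where
  "val a = (if a = 1 then 1 else if a = 2 then 2 else 0)"

definition R0 :: "nat \<times> nat \<times> nat \<Rightarrow> real" where
  "R0 x = val (fst (snd x))"

definition D :: "(nat \<Rightarrow> nat pmf) \<Rightarrow> (nat \<times> nat) pmf" where
  "D \<pi> = map_pmf (\<lambda>a. (0::nat, a)) (\<pi> 0)"

lemma pmfD: "pmf (D \<pi>) (s, a) = (if s = 0 then pmf (\<pi> 0) a else 0)"
proof (cases "s = 0")
  case True
  have "inj (\<lambda>a. (0::nat, a))" by (auto simp: inj_def)
  then show ?thesis using True pmf_map_inj'[of "Pair 0" "\<pi> 0" a] unfolding D_def by simp
next
  case False
  then show ?thesis unfolding D_def by (auto simp: pmf_eq_0_set_pmf)
qed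

lemma E0_simps[simp]: "Tr E0 s a = return_pmf 0" "In E0 = return_pmf 0"
  by (simp_all add: E0_def)

lemma cont_E0: "cont_prob E0 \<pi> s a xs = prod_list (map (pmf (D \<pi>)) xs)"
  by (induction xs arbitrary: s a) (auto simp: pmfD)

lemma prefix_E0: "prefix_prob E0 \<pi> xs = prod_list (map (pmf (D \<pi>)) xs)"
  by (cases xs) (auto simp: pmfD cont_E0)

lemma sets_SD: "sets (stream_space (measure_pmf p)) = sets (stream_space (count_space UNIV))"
  by (rule sets_stream_space_cong) simp

lemma emeasure_sstart_pmf:
  "emeasure (stream_space (measure_pmf p)) (sstart UNIV xs) = ennreal (prod_list (map (pmf p) xs))"
proof (induction xs)
  case Nil
  interpret S: prob_space "stream_space (measure_pmf p)"
    by (rule prob_space.prob_space_stream_space) (rule prob_space_measure_pmf)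
  show ?case using S.emeasure_space_1 by (simp add: space_stream_space)
next
  case (Cons x xs)
  interpret P: prob_space "measure_pmf p" by (rule prob_space_measure_pmf)
  have meas: "sstart UNIV (x # xs) \<in> sets (stream_space (measure_pmf p))"
    using sets_SD sstart_sets by blast
  have "emeasure (stream_space (measure_pmf p)) (sstart UNIV (x # xs)) =
     (\<integral>\<^sup>+t. emeasure (stream_space (measure_pmf p))
        {y\<in>space (stream_space (measure_pmf p)). t ## y \<in> sstart UNIV (x # xs)} \<partial>measure_pmf p)"
    by (rule prob_space.emeasure_stream_space[OF prob_space_measure_pmf meas])
  also have "\<dots> = (\<integral>\<^sup>+t. emeasure (stream_space (measure_pmf p)) (sstart UNIV xs) * indicator {x} t \<partial>measure_pmf p)"
    by (intro nn_integral_cong) (auto simp: space_stream_space split: split_indicator)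
  also have "\<dots> = emeasure (stream_space (measure_pmf p)) (sstart UNIV xs) * pmf p x"
    by (simp add: nn_integral_cmult_indicator emeasure_pmf_single)
  finally show ?case using Cons by (simp add: ennreal_mult' mult.commute)
qed

lemma traj_E0: "traj E0 \<pi> = stream_space (measure_pmf (D \<pi>))"
  unfolding traj_def
proof (rule the_equality)
  show "prob_space (stream_space (measure_pmf (D \<pi>))) \<and>
    sets (stream_space (measure_pmf (D \<pi>))) = sets (stream_space (count_space UNIV)) \<and>
    (\<forall>xs. emeasure (stream_space (measure_pmf (D \<pi>))) (sstart UNIV xs) = ennreal (prefix_prob E0 \<pi> xs))"
    by (simp add: prob_space.prob_space_stream_space prob_space_measure_pmf sets_SD
        emeasure_sstart_pmf prefix_E0)
next
  fix M assume M: "prob_space M \<and> sets M = sets (stream_space (count_space UNIV)) \<and>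
    (\<forall>xs. emeasure M (sstart UNIV xs) = ennreal (prefix_prob E0 \<pi> xs))"
  show "M = stream_space (measure_pmf (D \<pi>))"
    by (rule stream_space_eq_sstart[where S=UNIV])
       (use M in \<open>simp_all add: prob_space.prob_space_stream_space prob_space_measure_pmf sets_SD
        emeasure_sstart_pmf prefix_E0\<close>)
qed

lemma nn_marg:
  fixes f :: "'a \<Rightarrow> ennreal"
  shows "(\<integral>\<^sup>+\<omega>. f (\<omega> !! t) \<partial>stream_space (measure_pmf p)) = (\<integral>\<^sup>+x. f x \<partial>measure_pmf p)"
proof -
  interpret P: prob_space "measure_pmf p" by (rule prob_space_measure_pmf)
  interpret S: prob_space "stream_space (measure_pmf p)"
    by (rule prob_space.prob_space_stream_space[OF prob_space_measure_pmf])
  show ?thesis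
  proof (induction t)
    case 0
    have "(\<integral>\<^sup>+\<omega>. f (\<omega> !! 0) \<partial>stream_space (measure_pmf p)) =
      (\<integral>\<^sup>+x. (\<integral>\<^sup>+X. f ((x ## X) !! 0) \<partial>stream_space (measure_pmf p)) \<partial>measure_pmf p)"
      by (rule prob_space.nn_integral_stream_space[OF prob_space_measure_pmf])
         (rule measurable_compose[OF measurable_snth, of _ "measure_pmf p"], simp)
    also have "\<dots> = (\<integral>\<^sup>+x. f x \<partial>measure_pmf p)"
      by (simp add: S.emeasure_space_1)
    finally show ?case .
  next
    case (Suc t)
    have "(\<integral>\<^sup>+\<omega>. f (\<omega> !! Suc t) \<partial>stream_space (measure_pmf p)) =
      (\<integral>\<^sup>+x. (\<integral>\<^sup>+X. f ((x ## X) !! Suc t) \<partial>stream_space (measure_pmf p)) \<partial>measure_pmf p)"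
      by (rule prob_space.nn_integral_stream_space[OF prob_space_measure_pmf])
         (rule measurable_compose[OF measurable_snth, of _ "measure_pmf p"], simp)
    also have "\<dots> = (\<integral>\<^sup>+x. (\<integral>\<^sup>+x. f x \<partial>measure_pmf p) \<partial>measure_pmf p)"
      using Suc by simp
    also have "\<dots> = (\<integral>\<^sup>+x. f x \<partial>measure_pmf p)"
      by (simp add: measure_pmf.emeasure_space_1)
    finally show ?case .
  qed
qed

lemma marg:
  fixes g :: "'a \<Rightarrow> real"
  assumes "\<And>x. 0 \<le> g x"
  shows "(\<integral>\<omega>. g (\<omega> !! t) \<partial>stream_space (measure_pmf p)) = (\<integral>x. g x \<partial>measure_pmf p)"
proof -
  have "(\<integral>\<omega>. g (\<omega> !! t) \<partial>stream_space (measure_pmf p)) =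
     enn2real (\<integral>\<^sup>+\<omega>. ennreal (g (\<omega> !! t)) \<partial>stream_space (measure_pmf p))"
    by (rule integral_eq_nn_integral) (auto simp: assms intro!: measurable_compose[OF measurable_snth, of _ "measure_pmf p"])
  also have "\<dots> = enn2real (\<integral>\<^sup>+x. ennreal (g x) \<partial>measure_pmf p)"
    by (simp add: nn_marg[where f="\<lambda>x. ennreal (g x)"])
  also have "\<dots> = (\<integral>x. g x \<partial>measure_pmf p)"
    by (rule integral_eq_nn_integral[symmetric]) (auto simp: assms)
  finally show ?thesis .
qed

definition ev :: "(nat \<Rightarrow> nat pmf) \<Rightarrow> real" where
  "ev \<pi> = (\<integral>x. val (snd x) \<partial>measure_pmf (D \<pi>))"

lemma val_nonneg: "0 \<le> val a" and val_le: "val a \<le> 2"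
  by (auto simp: val_def)

lemma J_MR_E0: "J_MR E0 R0 0 \<pi> = ev \<pi>"
proof -
  have s: "(\<Sum>t. (0::real) ^ t * R0 (trans_at \<omega> t)) = val (snd (\<omega> !! 0))" for \<omega>
  proof -
    have "(\<lambda>t. (0::real) ^ t * R0 (trans_at \<omega> t)) = (\<lambda>t. if t = 0 then R0 (trans_at \<omega> 0) else 0)"
      by (auto simp: fun_eq_iff)
    then have "(\<lambda>t. (0::real) ^ t * R0 (trans_at \<omega> t)) sums R0 (trans_at \<omega> 0)"
      using sums_single[of 0 "\<lambda>_. R0 (trans_at \<omega> 0)"] by simp
    then show ?thesis by (simp add: sums_unique[symmetric] R0_def trans_at_def)
  qed
  show ?thesis
    unfolding J_MR_def traj_E0 s ev_def
    by (rule marg[where g = "\<lambda>x. val (snd x)"]) (simp add: val_nonneg)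
qed

lemma J_LAR_E0: "J_LAR E0 R0 \<pi> = ev \<pi>"
proof -
  interpret S: prob_space "stream_space (measure_pmf (D \<pi>))"
    by (rule prob_space.prob_space_stream_space) (rule prob_space_measure_pmf)
  have int: "integrable (stream_space (measure_pmf (D \<pi>))) (\<lambda>\<omega>. R0 (trans_at \<omega> t))" for t
  proof (rule S.integrable_const_bound[where B=2])
    show "AE x in stream_space (measure_pmf (D \<pi>)). norm (R0 (trans_at x t)) \<le> 2"
      by (auto simp: R0_def val_def)
    have "(\<lambda>\<omega>. val (snd (\<omega> !! t))) \<in> borel_measurable (stream_space (measure_pmf (D \<pi>)))"
      by measurable
    then show "(\<lambda>\<omega>. R0 (trans_at \<omega> t)) \<in> borel_measurable (stream_space (measure_pmf (D \<pi>)))"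
      by (simp add: R0_def trans_at_def)
  qed
  have eq: "(\<integral>\<omega>. (\<Sum>t<N. R0 (trans_at \<omega> t)) \<partial>traj E0 \<pi>) = real N * ev \<pi>" for N
  proof -
    have "(\<integral>\<omega>. (\<Sum>t<N. R0 (trans_at \<omega> t)) \<partial>traj E0 \<pi>) =
        (\<Sum>t<N. \<integral>\<omega>. R0 (trans_at \<omega> t) \<partial>stream_space (measure_pmf (D \<pi>)))"
      unfolding traj_E0 by (rule Bochner_Integration.integral_sum[where I="{..<N}" and f="\<lambda>t x. R0 (trans_at x t)"]) (rule int)
    also have "\<dots> = (\<Sum>t<N. ev \<pi>)"
    proof (intro sum.cong refl)
      fix t
      have "(\<integral>\<omega>. R0 (trans_at \<omega> t) \<partial>stream_space (measure_pmf (D \<pi>))) =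
          (\<integral>\<omega>. val (snd (\<omega> !! t)) \<partial>stream_space (measure_pmf (D \<pi>)))"
        by (simp add: R0_def trans_at_def)
      also have "\<dots> = ev \<pi>" unfolding ev_def
        by (rule marg[where g = "\<lambda>x::nat\<times>nat. val (snd x)"]) (simp add: val_nonneg)
      finally show "(\<integral>\<omega>. R0 (trans_at \<omega> t) \<partial>stream_space (measure_pmf (D \<pi>))) = ev \<pi>" .
    qed
    finally show ?thesis by simp
  qed
  have "(\<lambda>N. 1 / real N * (\<integral>\<omega>. (\<Sum>t<N. R0 (trans_at \<omega> t)) \<partial>traj E0 \<pi>)) \<longlonglongrightarrow> ev \<pi>"
    unfolding eq
    by (rule tendsto_eventually) (auto simp: eventually_sequentially intro!: exI[of _ 1])
  then show ?thesis unfolding J_LAR_def by (rule limI)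
qed

definition pk :: "nat \<Rightarrow> nat \<Rightarrow> nat pmf" where
  "pk k = (\<lambda>s. if s = 0 then return_pmf k else return_pmf undefined)"

lemma pk_pol: "k \<le> 2 \<Longrightarrow> pk k \<in> policies E0"
  by (auto simp: pk_def policies_def E0_def)

lemma ev_pk: "ev (pk k) = val k"
  by (simp add: ev_def D_def pk_def integral_return return_pmf.rep_eq)

lemma ltl_01:
  fixes f :: "(nat \<times> nat) stream \<Rightarrow> real"
  assumes "\<And>\<omega>. f \<omega> = 0 \<or> f \<omega> = 1"
  shows "(\<integral>\<omega>. f \<omega> \<partial>traj E0 (pk k)) = 0 \<or> (\<integral>\<omega>. f \<omega> \<partial>traj E0 (pk k)) = 1"
proof -
  have Dk: "D (pk k) = return_pmf (0, k)" by (simp add: D_def pk_def)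
  interpret P: prob_space "measure_pmf (return_pmf (0::nat, k))" by (rule prob_space_measure_pmf)
  interpret S: prob_space "stream_space (measure_pmf (return_pmf (0::nat, k)))"
    by (rule prob_space.prob_space_stream_space[OF prob_space_measure_pmf])
  have "AE \<omega> in stream_space (measure_pmf (return_pmf (0::nat, k))). stream_all (\<lambda>y. y = (0, k)) \<omega>"
    by (rule prob_space.AE_stream_all[OF prob_space_measure_pmf]) (auto simp: AE_measure_pmf_iff)
  then have ae: "AE \<omega> in stream_space (measure_pmf (return_pmf (0::nat, k))). \<omega> = sconst (0, k)"
  proof (rule AE_mp, intro AE_I2 impI)
    fix \<omega> :: "(nat \<times> nat) stream" assume "stream_all (\<lambda>y. y = (0, k)) \<omega>"
    then have "sset \<omega> \<subseteq> {(0, k)}" by auto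
    moreover have "shd \<omega> \<in> sset \<omega>" by (simp add: shd_sset)
    ultimately show "\<omega> = sconst (0, k)" unfolding sconst_alt by auto
  qed
  show ?thesis
  proof (cases "integrable (stream_space (measure_pmf (return_pmf (0::nat, k)))) f")
    case True
    then have "f \<in> borel_measurable (stream_space (measure_pmf (return_pmf (0::nat, k))))"
      by (rule borel_measurable_integrable)
    then have "(\<integral>\<omega>. f \<omega> \<partial>stream_space (measure_pmf (return_pmf (0::nat, k)))) =
        (\<integral>\<omega>. f (sconst (0, k)) \<partial>stream_space (measure_pmf (return_pmf (0::nat, k))))"
      by (intro integral_cong_AE) (use ae in auto)
    also have "\<dots> = f (sconst (0, k))" by (simp add: S.prob_space)
    finally show ?thesis unfolding traj_E0 Dk using assms by metis
  next
    case False
    then show ?thesis unfolding traj_E0 Dk by (simp add: not_integrable_integral_eq)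
  qed
qed

lemma wf_E0: "wf_env E0"
  by (auto simp: wf_env_def E0_def)

theorem mainTheorem10:
  shows "\<exists>E r. wf_env E \<and> preorder_on (policies E) r \<and> total_on (policies E) r \<and>
           r \<in> Ord_MR E \<inter> Ord_LAR E \<and> r \<notin> Ord_LTL E"
proof (intro exI conjI)
  let ?r = "induced_ord E0 ev"
  show "wf_env E0" by (rule wf_E0)
  show "preorder_on (policies E0) ?r"
    unfolding preorder_on_def refl_on_def trans_def induced_ord_def by auto
  show "total_on (policies E0) ?r"
    unfolding total_on_def induced_ord_def by auto
  have "induced_ord E0 (J_MR E0 R0 0) = ?r"
    unfolding induced_ord_def J_MR_E0 ..
  show "?r \<in> Ord_MR E0 \<inter> Ord_LAR E0"
  proof (rule IntI)
    show "?r \<in> Ord_MR E0" unfolding Ord_MR_def using \<open>induced_ord E0 (J_MR E0 R0 0) = ?r\<close>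
      by (intro CollectI exI[of _ R0] exI[of _ 0]) auto
    have "induced_ord E0 (J_LAR E0 R0) = ?r"
      unfolding induced_ord_def J_LAR_E0 ..
    then show "?r \<in> Ord_LAR E0" unfolding Ord_LAR_def
      by (intro CollectI exI[of _ R0]) auto
  qed
  show "?r \<notin> Ord_LTL E0"
  proof
    assume "?r \<in> Ord_LTL E0"
    then obtain \<phi> where eqr: "?r = induced_ord E0 (J_LTL E0 \<phi>)"
      unfolding Ord_LTL_def by auto
    define J where "J = J_LTL E0 \<phi>"
    have J01: "J (pk k) = 0 \<or> J (pk k) = 1" for k
      unfolding J_def J_LTL_def by (rule ltl_01) auto
    have key: "J (pk i) \<noteq> J (pk j)" if "i < j" "j \<le> 2" for i j
    proof
      assume "J (pk i) = J (pk j)"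
      then have "(pk i, pk j) \<in> induced_ord E0 J"
        using pk_pol that unfolding induced_ord_def by auto
      then have "(pk i, pk j) \<in> ?r" using eqr J_def by simp
      then have "val j \<le> val i" by (auto simp: induced_ord_def ev_pk)
      then show False using that by (auto simp: val_def split: if_splits)
    qed
    have "J (pk 0) \<noteq> J (pk 1)" "J (pk 0) \<noteq> J (pk 2)" "J (pk 1) \<noteq> J (pk 2)"
      using key[of 0 1] key[of 0 2] key[of 1 2] by auto
    then show False using J01[of 0] J01[of 1] J01[of 2] by auto
  qed
qed

end
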